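(* Let $(M,d)$ be a complete pointed metric space and let $\mu,\nu$ be positive Radon measures on $\beta\widetilde{M}$ such that $\mu\preccurlyeq\nu$ and $\nu$ is concentrated on $\mathcal{R}$. Then $p_i(\operatorname{supp}\mu)\subset p_i(\operatorname{supp}\nu)$ for $i=1,2$.
   Context: $\widetilde{M}=\{(x,y)\in M\times M:x\ne y\}$, $\beta\widetilde{M}$ its Stone–Čech compactification; Radon measures identified with $C(\beta\widetilde{M})^*$; $\operatorname{supp}$ denotes the closed support of a measure. $M^u$ is the uniform (Samuel) compactification of $M$; $p_1,p_2:\beta\widetilde{M}\to M^u$ continuously extend the coordinate projections, $p=(p_1,p_2)$. $\mathcal{R}(M)=\{\xi\in M^u:\overline{d_0}(\xi)<\infty\}$, where $\overline{d_0}:M^u\to[0,\infty]$ continuously extends $x\mapsto d(x,0)$ ($0$ the base point), and $\mathcal{R}=p^{-1}(\mathcal{R}(M)\times\mathcal{R}(M))$. $G$ is the set of $g\in C(\beta\widetilde{M})$ with $d(x,y)g(x,y)\le d(x,u)g(x,u)+d(u,y)g(u,y)$ for all distinct $x,u,y\in M$; $\mu\preccurlyeq\nu$ iff $\int g\,d\mu\le\int g\,d\nu$ for all $g\in G$. Throughout, $M$ has at least three distinct points. *)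

theory Defs
  imports "HOL-Analysis.Analysis"
begin

definition borel_of :: "'a topology \<Rightarrow> 'a measure" where
  "borel_of X = sigma (topspace X) {U. openin X U}"

text \<open>Positive Radon measure on a (compact Hausdorff) space K: a finite Borel measure,
  inner regular by compact sets (the positive elements of C(K)^* by Riesz).\<close>
definition radon_measure :: "'a topology \<Rightarrow> 'a measure \<Rightarrow> bool" where
  "radon_measure K \<mu> \<longleftrightarrow>
     sets \<mu> = sets (borel_of K) \<and> space \<mu> = topspace K \<and> finite_measure \<mu> \<and>
     (\<forall>B \<in> sets \<mu>. emeasure \<mu> B = (SUP C \<in> {C. compactin K C \<and> C \<subseteq> B}. emeasure \<mu> C))"

definition support_of :: "'a topology \<Rightarrow> 'a measure \<Rightarrow> 'a set" where
  "support_of K \<mu> = {x \<in> topspace K. \<forall>U. openin K U \<and> x \<in> U \<longrightarrow> emeasure \<mu> U > 0}"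

definition embed_by :: "('b \<Rightarrow> real) set \<Rightarrow> 'b \<Rightarrow> (('b \<Rightarrow> real) \<Rightarrow> real)" where
  "embed_by F x = restrict (\<lambda>f. f x) F"

definition compactification_by ::
  "'b topology \<Rightarrow> ('b \<Rightarrow> real) set \<Rightarrow> (('b \<Rightarrow> real) \<Rightarrow> real) topology" where
  "compactification_by X F =
     subtopology (product_topology (\<lambda>_. euclideanreal) F)
       ((product_topology (\<lambda>_. euclideanreal) F) closure_of (embed_by F ` topspace X))"

definition bcont :: "'b topology \<Rightarrow> ('b \<Rightarrow> real) set" where
  "bcont X = {f. continuous_map X euclideanreal f \<and> bounded (f ` topspace X)}"

definition stone_cech :: "'b topology \<Rightarrow> (('b \<Rightarrow> real) \<Rightarrow> real) topology" where
  "stone_cech X = compactification_by X (bcont X)"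

definition buc :: "'a set \<Rightarrow> ('a \<Rightarrow> 'a \<Rightarrow> real) \<Rightarrow> ('a \<Rightarrow> real) set" where
  "buc M d = {f. uniformly_continuous_map (metric (M,d)) euclidean_metric f \<and> bounded (f ` M)}"

definition samuel :: "'a set \<Rightarrow> ('a \<Rightarrow> 'a \<Rightarrow> real) \<Rightarrow> (('a \<Rightarrow> real) \<Rightarrow> real) topology" where
  "samuel M d = compactification_by (Metric_space.mtopology M d) (buc M d)"

definition cont_ext :: "'k topology \<Rightarrow> 'c topology \<Rightarrow> ('s \<Rightarrow> 'k) \<Rightarrow> 's set \<Rightarrow> ('s \<Rightarrow> 'c) \<Rightarrow> 'k \<Rightarrow> 'c" where
  "cont_ext K Y j S f = (SOME g. continuous_map K Y g \<and> (\<forall>s\<in>S. g (j s) = f s))"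

definition offdiag :: "'a set \<Rightarrow> ('a \<times> 'a) set" where
  "offdiag M = {(x,y). x \<in> M \<and> y \<in> M \<and> x \<noteq> y}"

definition offdiag_top :: "'a set \<Rightarrow> ('a \<Rightarrow> 'a \<Rightarrow> real) \<Rightarrow> ('a \<times> 'a) topology" where
  "offdiag_top M d = subtopology (prod_topology (Metric_space.mtopology M d) (Metric_space.mtopology M d)) (offdiag M)"

definition betaMt :: "'a set \<Rightarrow> ('a \<Rightarrow> 'a \<Rightarrow> real) \<Rightarrow> ((('a \<times> 'a) \<Rightarrow> real) \<Rightarrow> real) topology" where
  "betaMt M d = stone_cech (offdiag_top M d)"

definition jbeta :: "'a set \<Rightarrow> ('a \<Rightarrow> 'a \<Rightarrow> real) \<Rightarrow> 'a \<times> 'a \<Rightarrow> (('a \<times> 'a) \<Rightarrow> real) \<Rightarrow> real" where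
  "jbeta M d = embed_by (bcont (offdiag_top M d))"

definition ju :: "'a set \<Rightarrow> ('a \<Rightarrow> 'a \<Rightarrow> real) \<Rightarrow> 'a \<Rightarrow> ('a \<Rightarrow> real) \<Rightarrow> real" where
  "ju M d = embed_by (buc M d)"

definition proj1 :: "'a set \<Rightarrow> ('a \<Rightarrow> 'a \<Rightarrow> real) \<Rightarrow> ((('a \<times> 'a) \<Rightarrow> real) \<Rightarrow> real) \<Rightarrow> ('a \<Rightarrow> real) \<Rightarrow> real" where
  "proj1 M d = cont_ext (betaMt M d) (samuel M d) (jbeta M d) (offdiag M) (\<lambda>(x,y). ju M d x)"

definition proj2 :: "'a set \<Rightarrow> ('a \<Rightarrow> 'a \<Rightarrow> real) \<Rightarrow> ((('a \<times> 'a) \<Rightarrow> real) \<Rightarrow> real) \<Rightarrow> ('a \<Rightarrow> real) \<Rightarrow> real" where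
  "proj2 M d = cont_ext (betaMt M d) (samuel M d) (jbeta M d) (offdiag M) (\<lambda>(x,y). ju M d y)"

definition dbar0 :: "'a set \<Rightarrow> ('a \<Rightarrow> 'a \<Rightarrow> real) \<Rightarrow> 'a \<Rightarrow> (('a \<Rightarrow> real) \<Rightarrow> real) \<Rightarrow> ereal" where
  "dbar0 M d z = cont_ext (samuel M d) (euclidean :: ereal topology) (ju M d) M (\<lambda>x. ereal (d x z))"

definition RM :: "'a set \<Rightarrow> ('a \<Rightarrow> 'a \<Rightarrow> real) \<Rightarrow> 'a \<Rightarrow> (('a \<Rightarrow> real) \<Rightarrow> real) set" where
  "RM M d z = {\<xi> \<in> topspace (samuel M d). dbar0 M d z \<xi> < \<infinity>}"

definition Rset :: "'a set \<Rightarrow> ('a \<Rightarrow> 'a \<Rightarrow> real) \<Rightarrow> 'a \<Rightarrow> ((('a \<times> 'a) \<Rightarrow> real) \<Rightarrow> real) set" where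
  "Rset M d z = {\<phi> \<in> topspace (betaMt M d). proj1 M d \<phi> \<in> RM M d z \<and> proj2 M d \<phi> \<in> RM M d z}"

definition Gset :: "'a set \<Rightarrow> ('a \<Rightarrow> 'a \<Rightarrow> real) \<Rightarrow> (((('a \<times> 'a) \<Rightarrow> real) \<Rightarrow> real) \<Rightarrow> real) set" where
  "Gset M d = {g. continuous_map (betaMt M d) euclideanreal g \<and>
     (\<forall>x\<in>M. \<forall>u\<in>M. \<forall>y\<in>M. x \<noteq> u \<and> u \<noteq> y \<and> x \<noteq> y \<longrightarrow>
        d x y * g (jbeta M d (x,y)) \<le> d x u * g (jbeta M d (x,u)) + d u y * g (jbeta M d (u,y)))}"

definition mpreceq :: "'a set \<Rightarrow> ('a \<Rightarrow> 'a \<Rightarrow> real) \<Rightarrow> ((('a \<times> 'a) \<Rightarrow> real) \<Rightarrow> real) measure \<Rightarrow> ((('a \<times> 'a) \<Rightarrow> real) \<Rightarrow> real) measure \<Rightarrow> bool" where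
  "mpreceq M d \<mu> \<nu> \<longleftrightarrow> (\<forall>g \<in> Gset M d. integral\<^sup>L \<mu> g \<le> integral\<^sup>L \<nu> g)"

end

theory Submission
  imports Defs
begin


definition ucf :: "'a set \<Rightarrow> ('a \<Rightarrow> 'a \<Rightarrow> real) \<Rightarrow> ('a \<Rightarrow> real) \<Rightarrow> bool" where
  "ucf M d f \<longleftrightarrow> (\<forall>e>0. \<exists>\<delta>>0. \<forall>x\<in>M. \<forall>y\<in>M. d y x < \<delta> \<longrightarrow> \<bar>f y - f x\<bar> < e)"

definition Efun :: "real \<Rightarrow> ereal" where
  "Efun t = (if t < 1 then ereal (t / (1 - t)) else \<infinity>)"

lemma Efun_cont: "continuous_map euclideanreal euclidean Efun"
proof -
  have "isCont Efun x" for x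
  proof (cases "x < 1")
    case True
    have ev: "eventually (\<lambda>t. t < 1) (at x)"
      using order_tendstoD(2)[OF tendsto_ident_at True] .
    have "((\<lambda>t. ereal (t / (1 - t))) \<longlongrightarrow> ereal (x / (1 - x))) (at x)"
      using True by (intro tendsto_ereal tendsto_intros) auto
    then have "((\<lambda>t. ereal (t / (1 - t))) \<longlongrightarrow> Efun x) (at x)"
      using True by (simp add: Efun_def)
    then show ?thesis unfolding isCont_def
      by (rule Lim_transform_eventually) (use ev in \<open>auto elim: eventually_mono simp: Efun_def\<close>)
  next
    case False
    have "(Efun \<longlongrightarrow> \<infinity>) (at x)"
      unfolding tendsto_PInfty
    proof
      fix r :: real
      define c where "c = (\<bar>r\<bar> + 1) / (\<bar>r\<bar> + 2)"
      have c1: "c < 1" unfolding c_def by (simp add: divide_less_eq)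
      have "eventually (\<lambda>t. c < t) (at x)"
        using order_tendstoD(1)[OF tendsto_ident_at, of c x] c1 False by auto
      then show "eventually (\<lambda>t. ereal r < Efun t) (at x)"
      proof (rule eventually_mono)
        fix t assume ct: "c < t"
        show "ereal r < Efun t"
        proof (cases "t < 1")
          case True
          have "t * (\<bar>r\<bar> + 2) > \<bar>r\<bar> + 1"
            using ct unfolding c_def by (simp add: divide_less_eq)
          then have "\<bar>r\<bar> + 1 < t / (1 - t)"
            using True by (simp add: less_divide_eq algebra_simps)
          then show ?thesis using True by (simp add: Efun_def)
        qed (simp add: Efun_def)
      qed
    qed
    then show ?thesis using False by (simp add: isCont_def Efun_def)
  qed
  then have "continuous_on UNIV Efun" by (simp add: continuous_at_imp_continuous_on)
  then show ?thesis by simp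
qed

lemma cont_ext_prop:
  assumes "\<exists>g. continuous_map K Y g \<and> (\<forall>s\<in>S. g (j s) = f s)"
  shows "continuous_map K Y (cont_ext K Y j S f) \<and> (\<forall>s\<in>S. cont_ext K Y j S f (j s) = f s)"
  unfolding cont_ext_def using someI_ex[OF assms] .

lemma radon_open:
  assumes "radon_measure K \<mu>" "openin K U"
  shows "U \<in> sets \<mu>"
proof -
  have sub: "{U. openin K U} \<subseteq> Pow (topspace K)" using openin_subset by auto
  have "U \<in> sigma_sets (topspace K) {U. openin K U}" using assms(2) by (auto intro: sigma_sets.Basic)
  then show ?thesis using assms(1) sets_measure_of[OF sub]
    by (simp add: radon_measure_def borel_of_def)
qed

lemma radon_space: "radon_measure K \<mu> \<Longrightarrow> space \<mu> = topspace K"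
  by (simp add: radon_measure_def)

lemma radon_closed:
  assumes "radon_measure K \<mu>" "closedin K C"
  shows "C \<in> sets \<mu>"
proof -
  have "topspace K - C \<in> sets \<mu>" using radon_open[OF assms(1)] assms(2) by (simp add: openin_diff)
  then have "space \<mu> - (topspace K - C) \<in> sets \<mu>" by auto
  moreover have "space \<mu> - (topspace K - C) = C"
    using radon_space[OF assms(1)] closedin_subset[OF assms(2)] by auto
  ultimately show ?thesis by simp
qed

lemma radon_meas:
  assumes "radon_measure K \<mu>" "continuous_map K euclideanreal g"
  shows "g \<in> borel_measurable \<mu>"
proof (rule borel_measurableI)
  fix S :: "real set" assume "open S"
  then have "openin K {x \<in> topspace K. g x \<in> S}"
    using assms(2) by (intro openin_continuous_map_preimage) auto
  moreover have "g -` S \<inter> space \<mu> = {x \<in> topspace K. g x \<in> S}"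
    using radon_space[OF assms(1)] by auto
  ultimately show "g -` S \<inter> space \<mu> \<in> sets \<mu>" using radon_open[OF assms(1)] by simp
qed

lemma radon_integrable:
  assumes "radon_measure K \<mu>" "continuous_map K euclideanreal g" "\<And>x. x \<in> topspace K \<Longrightarrow> \<bar>g x\<bar> \<le> B"
  shows "integrable \<mu> g"
proof -
  interpret finite_measure \<mu> using assms(1) by (simp add: radon_measure_def)
  show ?thesis
    by (rule integrable_const_bound[where B=B])
      (use assms radon_space[OF assms(1)] radon_meas[OF assms(1,2)] in auto)
qed

lemma supp_open: "openin K (topspace K - support_of K \<mu>)"
proof (subst openin_subopen, intro ballI)
  fix x assume x: "x \<in> topspace K - support_of K \<mu>"
  then obtain V where V: "openin K V" "x \<in> V" "\<not> emeasure \<mu> V > 0"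
    by (auto simp: support_of_def)
  have "V \<subseteq> topspace K - support_of K \<mu>"
    using V openin_subset[OF V(1)] by (auto simp: support_of_def)
  then show "\<exists>T. openin K T \<and> x \<in> T \<and> T \<subseteq> topspace K - support_of K \<mu>" using V by blast
qed

lemma supp_closed: "closedin K (support_of K \<mu>)"
proof -
  have "support_of K \<mu> \<subseteq> topspace K" by (auto simp: support_of_def)
  then show ?thesis using supp_open[of K \<mu>] by (simp add: closedin_def)
qed

lemma supp_null:
  assumes "radon_measure K \<mu>"
  shows "emeasure \<mu> (topspace K - support_of K \<mu>) = 0"
proof -
  let ?U = "topspace K - support_of K \<mu>"
  have U: "?U \<in> sets \<mu>" using radon_open[OF assms supp_open] .
  have "emeasure \<mu> C = 0" if C: "compactin K C" "C \<subseteq> ?U" for C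
  proof -
    let ?V = "{V. openin K V \<and> emeasure \<mu> V = 0}"
    have cov: "C \<subseteq> \<Union>?V"
    proof
      fix x assume "x \<in> C"
      then have "x \<in> ?U" using C by auto
      then obtain V where "openin K V" "x \<in> V" "\<not> emeasure \<mu> V > 0"
        by (auto simp: support_of_def)
      then show "x \<in> \<Union>?V" by (auto simp: not_gr_zero)
    qed
    obtain F where F: "finite F" "F \<subseteq> ?V" "C \<subseteq> \<Union>F"
      using C(1) cov unfolding compactin_def by (metis (no_types, lifting) mem_Collect_eq)
    have Fs: "(\<lambda>V. V) ` F \<subseteq> sets \<mu>" using F(2) radon_open[OF assms] by auto
    have "emeasure \<mu> (\<Union>V\<in>F. V) \<le> (\<Sum>V\<in>F. emeasure \<mu> V)"
      by (rule emeasure_subadditive_finite[OF F(1) Fs])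
    also have "\<dots> = 0" using F(2) by (auto intro: sum.neutral)
    finally have z: "emeasure \<mu> (\<Union>F) = 0" by simp
    have "\<Union>F \<in> sets \<mu>" using Fs F(1) by auto
    show ?thesis
    proof (cases "C \<in> sets \<mu>")
      case True
      then show ?thesis using emeasure_mono[OF F(3) \<open>\<Union>F \<in> sets \<mu>\<close>] z by simp
    qed (simp add: emeasure_notin_sets)
  qed
  then have "(SUP C \<in> {C. compactin K C \<and> C \<subseteq> ?U}. emeasure \<mu> C) = 0"
    by (intro antisym SUP_least) auto
  then show ?thesis using assms U unfolding radon_measure_def by auto
qed

definition Gr :: "('a \<Rightarrow> 'a \<Rightarrow> real) \<Rightarrow> 'a \<Rightarrow> real \<Rightarrow> 'a \<times> 'a \<Rightarrow> real" where
  "Gr d z r p = min 1 ((max (d (fst p) z - r) 0 + max (d (snd p) z - r) 0) / d (fst p) (snd p))"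

lemma mulmin: "(c::real) > 0 \<Longrightarrow> c * min 1 (t / c) = min c t"
  by (simp add: min_def field_simps)

lemma ucf_const: "ucf M d (\<lambda>x. c)"
  unfolding ucf_def by (auto intro: exI[of _ 1])

lemma ucf_add:
  assumes "ucf M d f" "ucf M d g" shows "ucf M d (\<lambda>x. f x + g x)"
  unfolding ucf_def
proof (intro allI impI)
  fix e :: real assume e: "e > 0"
  obtain d1 where d1: "d1 > 0" "\<forall>x\<in>M. \<forall>y\<in>M. d y x < d1 \<longrightarrow> \<bar>f y - f x\<bar> < e/2"
    using assms(1) e unfolding ucf_def by (meson half_gt_zero)
  obtain d2 where d2: "d2 > 0" "\<forall>x\<in>M. \<forall>y\<in>M. d y x < d2 \<longrightarrow> \<bar>g y - g x\<bar> < e/2"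
    using assms(2) e unfolding ucf_def by (meson half_gt_zero)
  show "\<exists>\<delta>>0. \<forall>x\<in>M. \<forall>y\<in>M. d y x < \<delta> \<longrightarrow> \<bar>f y + g y - (f x + g x)\<bar> < e"
  proof (intro exI[of _ "min d1 d2"] conjI ballI impI)
    fix x y assume xy: "x \<in> M" "y \<in> M" "d y x < min d1 d2"
    then have "\<bar>f y - f x\<bar> < e/2" "\<bar>g y - g x\<bar> < e/2" using d1 d2 by auto
    then show "\<bar>f y + g y - (f x + g x)\<bar> < e" by linarith
  qed (use d1 d2 in auto)
qed

lemma ucf_sum:
  assumes "finite I" "\<And>i. i \<in> I \<Longrightarrow> ucf M d (f i)" shows "ucf M d (\<lambda>x. \<Sum>i\<in>I. f i x)"
  using assms by (induction I rule: finite_induct) (auto intro: ucf_const ucf_add)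

lemma ucf_comp_lip:
  assumes "ucf M d f" "\<And>a b. \<bar>h a - h b\<bar> \<le> L * \<bar>a - b\<bar>" "L \<ge> 0"
  shows "ucf M d (\<lambda>x. h (f x))"
  unfolding ucf_def
proof (intro allI impI)
  fix e :: real assume e: "e > 0"
  then have "e / (L + 1) > 0" using assms(3) by simp
  then obtain d1 where d1: "d1 > 0" "\<forall>x\<in>M. \<forall>y\<in>M. d y x < d1 \<longrightarrow> \<bar>f y - f x\<bar> < e / (L + 1)"
    using assms(1) unfolding ucf_def by meson
  show "\<exists>\<delta>>0. \<forall>x\<in>M. \<forall>y\<in>M. d y x < \<delta> \<longrightarrow> \<bar>h (f y) - h (f x)\<bar> < e"
  proof (intro exI[of _ d1] conjI ballI impI)
    fix x y assume xy: "x \<in> M" "y \<in> M" "d y x < d1"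
    have "\<bar>h (f y) - h (f x)\<bar> \<le> L * \<bar>f y - f x\<bar>" by (rule assms(2))
    also have "\<dots> \<le> (L + 1) * \<bar>f y - f x\<bar>" by (simp add: algebra_simps)
    also have "\<dots> < e" using d1 xy assms(3) by (simp add: less_divide_eq mult.commute)
    finally show "\<bar>h (f y) - h (f x)\<bar> < e" .
  qed (use d1 in auto)
qed

definition infc :: "'a set \<Rightarrow> ('a \<Rightarrow> 'a \<Rightarrow> real) \<Rightarrow> ('a \<Rightarrow> real) \<Rightarrow> 'a \<Rightarrow> real" where
  "infc M d a x = (INF u\<in>M. a u + d x u)"

definition Gl :: "('a \<Rightarrow> 'a \<Rightarrow> real) \<Rightarrow> ('a \<times> 'a \<Rightarrow> 'a) \<Rightarrow> ('a \<Rightarrow> real) \<Rightarrow> 'a \<times> 'a \<Rightarrow> real" where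
  "Gl d sel b p = min 1 (b (sel p) / d (fst p) (snd p))"

locale msp = fixes M :: "'a set" and d :: "'a \<Rightarrow> 'a \<Rightarrow> real"
  assumes ms: "Metric_space M d"
begin

lemma topspace_offdiag: "topspace (offdiag_top M d) = offdiag M"
  using Metric_space.topspace_mtopology[OF ms]
  by (auto simp: offdiag_top_def offdiag_def)

lemma embed_in_top: "embed_by F s \<in> topspace (product_topology (\<lambda>_. euclideanreal) F)"
  by (simp add: embed_by_def)

lemma top_beta: "topspace (betaMt M d) =
   product_topology (\<lambda>_. euclideanreal) (bcont (offdiag_top M d)) closure_of (jbeta M d ` offdiag M)"
  using closure_of_subset_topspace[of "product_topology (\<lambda>_. euclideanreal) (bcont (offdiag_top M d))"]
  by (auto simp: betaMt_def stone_cech_def compactification_by_def jbeta_def topspace_offdiag)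

lemma jbeta_in: "s \<in> offdiag M \<Longrightarrow> jbeta M d s \<in> topspace (betaMt M d)"
  unfolding top_beta
  by (rule closure_of_subset[THEN subsetD]) (auto simp: jbeta_def embed_by_def)

lemma ev_cont: "F \<in> bcont (offdiag_top M d) \<Longrightarrow> continuous_map (betaMt M d) euclideanreal (\<lambda>\<phi>. \<phi> F)"
  unfolding betaMt_def stone_cech_def compactification_by_def
  by (rule continuous_map_from_subtopology, rule continuous_map_product_projection)

lemma ev_jbeta: "F \<in> bcont (offdiag_top M d) \<Longrightarrow> jbeta M d s F = F s"
  by (simp add: jbeta_def embed_by_def)

lemma dense_beta:
  assumes "\<phi> \<in> topspace (betaMt M d)" "openin (betaMt M d) U" "\<phi> \<in> U"
  shows "\<exists>s\<in>offdiag M. jbeta M d s \<in> U"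
proof -
  let ?P = "product_topology (\<lambda>_. euclideanreal) (bcont (offdiag_top M d))"
  let ?C = "?P closure_of (jbeta M d ` offdiag M)"
  have bt: "betaMt M d = subtopology ?P ?C"
    by (simp add: betaMt_def stone_cech_def compactification_by_def jbeta_def topspace_offdiag)
  obtain T where T: "openin ?P T" "U = T \<inter> ?C" using assms(2) bt by (auto simp: openin_subtopology)
  have "\<phi> \<in> ?C" using assms(1) top_beta by simp
  then have "\<exists>y. y \<in> jbeta M d ` offdiag M \<and> y \<in> T"
    using T assms(3) unfolding in_closure_of by blast
  then obtain y where "y \<in> jbeta M d ` offdiag M" "y \<in> T" by blast
  moreover have "y \<in> ?C" using calculation(1) jbeta_in top_beta by auto
  ultimately show ?thesis using T by auto
qed

lemma compact_beta: "compact_space (betaMt M d)"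
proof -
  let ?B = "bcont (offdiag_top M d)"
  let ?P = "product_topology (\<lambda>_. euclideanreal) ?B"
  let ?C = "?P closure_of (jbeta M d ` offdiag M)"
  define b where "b F = (SOME b. \<forall>s\<in>offdiag M. \<bar>F s\<bar> \<le> b)" for F :: "'a\<times>'a \<Rightarrow> real"
  have bF: "\<forall>s\<in>offdiag M. \<bar>F s\<bar> \<le> b F" if "F \<in> ?B" for F
  proof -
    have "bounded (F ` offdiag M)" using that by (simp add: bcont_def topspace_offdiag)
    then obtain B where "\<forall>s\<in>offdiag M. \<bar>F s\<bar> \<le> B"
      by (auto simp: bounded_iff)
    then show ?thesis unfolding b_def by (rule someI)
  qed
  let ?Q = "PiE ?B (\<lambda>F. {-b F..b F})"
  have "jbeta M d ` offdiag M \<subseteq> ?Q"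
    using bF by (auto simp: jbeta_def embed_by_def abs_le_iff) (metis minus_le_iff)
  moreover have "closedin ?P ?Q"
    by (simp add: closedin_product_topology)
  ultimately have "?C \<subseteq> ?Q" by (rule closure_of_minimal)
  moreover have "compactin ?P ?Q" by (simp add: compactin_PiE)
  ultimately have "compactin ?P ?C"
    by (meson closed_compactin closedin_closure_of)
  then show ?thesis
    by (simp add: betaMt_def stone_cech_def compactification_by_def jbeta_def topspace_offdiag
        compact_space_subtopology)
qed

lemma mtop_eq: "mtopology_of (metric (M,d)) = Metric_space.mtopology M d"
  by (simp add: mtopology_of_def Metric_space.mspace_metric[OF ms] Metric_space.mdist_metric[OF ms])

lemma buc_iff: "f \<in> buc M d \<longleftrightarrow> ucf M d f \<and> bounded (f ` M)"
  by (simp add: buc_def uniformly_continuous_map_def ucf_def Metric_space.mspace_metric[OF ms]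
      Metric_space.mdist_metric[OF ms] dist_real_def)

lemma buc_cont: "f \<in> buc M d \<Longrightarrow> continuous_map (Metric_space.mtopology M d) euclideanreal f"
  using uniformly_continuous_imp_continuous_map[of "metric (M,d)" euclidean_metric f]
  by (simp add: buc_def mtop_eq)

lemma lip_ucf:
  assumes "\<And>x y. x \<in> M \<Longrightarrow> y \<in> M \<Longrightarrow> \<bar>f x - f y\<bar> \<le> L * d x y" "L \<ge> 0"
  shows "ucf M d f"
  unfolding ucf_def
proof (intro allI impI)
  fix e :: real assume e: "e > 0"
  show "\<exists>\<delta>>0. \<forall>x\<in>M. \<forall>y\<in>M. d y x < \<delta> \<longrightarrow> \<bar>f y - f x\<bar> < e"
  proof (intro exI[of _ "e / (L + 1)"] conjI ballI impI)
    show "e / (L + 1) > 0" using e assms(2) by simp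
    fix x y assume xy: "x \<in> M" "y \<in> M" "d y x < e / (L + 1)"
    have "\<bar>f y - f x\<bar> \<le> L * d y x" using assms(1) xy by simp
    also have "\<dots> \<le> (L + 1) * d y x" using Metric_space.nonneg[OF ms] by (simp add: algebra_simps)
    also have "\<dots> < e" using xy(3) assms(2) by (simp add: less_divide_eq mult.commute)
    finally show "\<bar>f y - f x\<bar> < e" .
  qed
qed

lemma sel_cont:
  assumes "sel = fst \<or> sel = snd"
  shows "continuous_map (offdiag_top M d) (Metric_space.mtopology M d) sel"
  using assms unfolding offdiag_top_def
  by (auto intro: continuous_map_from_subtopology continuous_map_fst continuous_map_snd)

lemma sel_in: "sel = fst \<or> sel = snd \<Longrightarrow> s \<in> offdiag M \<Longrightarrow> sel s \<in> M"
  by (auto simp: offdiag_def)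

lemma dist_cont: "continuous_map (offdiag_top M d) euclideanreal (\<lambda>p. d (fst p) (snd p))"
proof -
  have "continuous_map (offdiag_top M d) euclidean (\<lambda>p. mdist (metric (M,d)) (fst p) (snd p))"
    by (intro continuous_map_mdist) (use sel_cont[of fst] sel_cont[of snd] in \<open>auto simp: mtop_eq\<close>)
  then show ?thesis by (simp add: Metric_space.mdist_metric[OF ms])
qed

lemma dist_pos: "p \<in> offdiag M \<Longrightarrow> d (fst p) (snd p) > 0"
  using Metric_space.nonneg[OF ms] Metric_space.zero[OF ms]
  by (auto simp: offdiag_def) (metis order_le_less)

lemma bcontI:
  assumes "continuous_map (offdiag_top M d) euclideanreal F" "\<And>s. s \<in> offdiag M \<Longrightarrow> \<bar>F s\<bar> \<le> B"
  shows "F \<in> bcont (offdiag_top M d)"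
proof -
  have "\<forall>x\<in>F ` offdiag M. norm x \<le> B" using assms(2) by auto
  then show ?thesis using assms(1) unfolding bcont_def topspace_offdiag bounded_iff by blast
qed

lemma top_samuel: "topspace (samuel M d) =
   product_topology (\<lambda>_. euclideanreal) (buc M d) closure_of (ju M d ` M)"
  using closure_of_subset_topspace[of "product_topology (\<lambda>_. euclideanreal) (buc M d)"]
  by (auto simp: samuel_def compactification_by_def ju_def Metric_space.topspace_mtopology[OF ms])

lemma samuel_eq: "samuel M d = subtopology (product_topology (\<lambda>_. euclideanreal) (buc M d))
   (product_topology (\<lambda>_. euclideanreal) (buc M d) closure_of (ju M d ` M))"
  by (simp add: samuel_def compactification_by_def ju_def Metric_space.topspace_mtopology[OF ms])

lemma ju_in: "x \<in> M \<Longrightarrow> ju M d x \<in> topspace (samuel M d)"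
  unfolding top_samuel
  by (rule closure_of_subset[THEN subsetD]) (auto simp: ju_def embed_by_def)

lemma evu_cont: "f \<in> buc M d \<Longrightarrow> continuous_map (samuel M d) euclideanreal (\<lambda>\<psi>. \<psi> f)"
  unfolding samuel_eq
  by (rule continuous_map_from_subtopology, rule continuous_map_product_projection)

lemma ju_ev: "f \<in> buc M d \<Longrightarrow> ju M d x f = f x"
  by (simp add: ju_def embed_by_def)

lemma samuel_PiE: "\<psi> \<in> topspace (samuel M d) \<Longrightarrow> \<psi> \<in> PiE (buc M d) (\<lambda>_. UNIV)"
  using closure_of_subset_topspace top_samuel by fastforce

lemma lift_bcont:
  assumes "sel = fst \<or> sel = snd" "f \<in> buc M d"
  shows "(\<lambda>p. f (sel p)) \<in> bcont (offdiag_top M d)"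
proof -
  obtain B where B: "\<And>x. x \<in> M \<Longrightarrow> \<bar>f x\<bar> \<le> B"
    using assms(2) unfolding buc_iff bounded_iff by auto
  show ?thesis
    by (rule bcontI[where B=B])
      (use continuous_map_compose[OF sel_cont[OF assms(1)] buc_cont[OF assms(2)]] B sel_in[OF assms(1)]
       in \<open>auto simp: o_def\<close>)
qed

lemma proj_exists:
  assumes "sel = fst \<or> sel = snd"
  shows "\<exists>g. continuous_map (betaMt M d) (samuel M d) g \<and> (\<forall>s\<in>offdiag M. g (jbeta M d s) = ju M d (sel s))"
proof -
  let ?B = "bcont (offdiag_top M d)"
  let ?P = "product_topology (\<lambda>_. euclideanreal) ?B"
  let ?P' = "product_topology (\<lambda>_. euclideanreal) (buc M d)"
  define P1 where "P1 \<phi> = restrict (\<lambda>f. \<phi> (\<lambda>p. f (sel p))) (buc M d)" for \<phi> :: "(('a\<times>'a) \<Rightarrow> real) \<Rightarrow> real"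
  have cP: "continuous_map ?P ?P' P1"
    unfolding continuous_map_componentwise
  proof
    show "P1 ` topspace ?P \<subseteq> extensional (buc M d)" by (auto simp: P1_def)
    show "\<forall>k\<in>buc M d. continuous_map ?P euclideanreal (\<lambda>x. P1 x k)"
    proof
      fix k assume k: "k \<in> buc M d"
      have "continuous_map ?P euclideanreal (\<lambda>x. x (\<lambda>p. k (sel p)))"
        by (rule continuous_map_product_projection) (rule lift_bcont[OF assms k])
      then show "continuous_map ?P euclideanreal (\<lambda>x. P1 x k)"
        by (rule continuous_map_eq) (simp add: P1_def k)
    qed
  qed
  have eqj: "P1 (jbeta M d s) = ju M d (sel s)" for s
    using lift_bcont[OF assms]
    by (auto simp: P1_def jbeta_def ju_def embed_by_def restrict_def)
  have "P1 ` topspace (betaMt M d) \<subseteq> ?P' closure_of P1 ` (jbeta M d ` offdiag M)"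
    unfolding top_beta by (rule continuous_map_image_closure_subset[OF cP])
  also have "\<dots> \<subseteq> ?P' closure_of (ju M d ` M)"
    by (rule closure_of_mono) (use eqj sel_in[OF assms] in auto)
  finally have img: "P1 ` topspace (betaMt M d) \<subseteq> ?P' closure_of (ju M d ` M)" .
  have "continuous_map (betaMt M d) ?P' P1"
    unfolding betaMt_def stone_cech_def compactification_by_def
    by (rule continuous_map_from_subtopology[OF cP])
  then have "continuous_map (betaMt M d) (samuel M d) P1"
    unfolding samuel_eq continuous_map_in_subtopology using img by auto
  then show ?thesis using eqj by blast
qed

lemma proj1_props: "continuous_map (betaMt M d) (samuel M d) (proj1 M d) \<and>
   (\<forall>s\<in>offdiag M. proj1 M d (jbeta M d s) = ju M d (fst s))"
proof -
  have e: "(\<lambda>(x,y). ju M d x) = (\<lambda>p. ju M d (fst p))" by auto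
  show ?thesis unfolding proj1_def e by (rule cont_ext_prop[OF proj_exists]) simp
qed

lemma proj2_props: "continuous_map (betaMt M d) (samuel M d) (proj2 M d) \<and>
   (\<forall>s\<in>offdiag M. proj2 M d (jbeta M d s) = ju M d (snd s))"
proof -
  have e: "(\<lambda>(x,y). ju M d y) = (\<lambda>p. ju M d (snd p))" by auto
  show ?thesis unfolding proj2_def e by (rule cont_ext_prop[OF proj_exists]) simp
qed

lemma dbar0_props:
  assumes "z \<in> M"
  shows "continuous_map (samuel M d) euclidean (dbar0 M d z) \<and> (\<forall>x\<in>M. dbar0 M d z (ju M d x) = ereal (d x z))"
proof -
  define h where "h x = d x z / (1 + d x z)" for x
  have nn: "d x z \<ge> 0" for x using Metric_space.nonneg[OF ms] .
  have hl: "\<bar>h x - h y\<bar> \<le> 1 * d x y" if "x \<in> M" "y \<in> M" for x y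
  proof -
    have "h x - h y = (d x z - d y z) / ((1 + d x z) * (1 + d y z))"
      using nn[of x] nn[of y] by (simp add: h_def field_simps)
    also have "\<bar>\<dots>\<bar> \<le> \<bar>d x z - d y z\<bar>"
    proof -
      have p1: "(1 + d x z) * (1 + d y z) \<ge> 1" using nn[of x] nn[of y]
        by (metis add_increasing le_add_same_cancel1 mult_1 mult_mono zero_le_one)
      then have "\<bar>(d x z - d y z) / ((1 + d x z) * (1 + d y z))\<bar> = \<bar>d x z - d y z\<bar> / ((1 + d x z) * (1 + d y z))"
        by simp
      also have "\<dots> \<le> \<bar>d x z - d y z\<bar> / 1"
        by (rule divide_left_mono) (use p1 in auto)
      finally show ?thesis by simp
    qed
    also have "\<dots> \<le> d x y"
      using Metric_space.triangle[OF ms] Metric_space.commute[OF ms] that assms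
      by (smt (verit))
    finally show ?thesis by simp
  qed
  have hb: "\<bar>h x\<bar> \<le> 1" for x using nn[of x] by (simp add: h_def)
  have hbuc: "h \<in> buc M d"
    unfolding buc_iff bounded_iff using lip_ucf[OF hl] hb by auto
  define D where "D \<psi> = Efun (\<psi> h)" for \<psi> :: "('a \<Rightarrow> real) \<Rightarrow> real"
  have "continuous_map (samuel M d) euclidean D"
    unfolding D_def using continuous_map_compose[OF evu_cont[OF hbuc] Efun_cont] by (simp add: o_def)
  moreover have "D (ju M d x) = ereal (d x z)" for x
  proof -
    have "h x < 1" using nn[of x] by (simp add: h_def)
    moreover have "h x / (1 - h x) = d x z" using nn[of x] by (simp add: h_def field_simps)
    ultimately show ?thesis by (simp add: D_def ju_ev[OF hbuc] Efun_def)
  qed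
  ultimately show ?thesis unfolding dbar0_def by (intro cont_ext_prop) blast
qed

lemma dense_bound:
  assumes g: "continuous_map (betaMt M d) euclideanreal g" and \<phi>: "\<phi> \<in> topspace (betaMt M d)"
    and U: "openin (betaMt M d) U" "\<phi> \<in> U" and C: "closed C"
    and H: "\<And>s. s \<in> offdiag M \<Longrightarrow> jbeta M d s \<in> U \<Longrightarrow> g (jbeta M d s) \<in> C"
  shows "g \<phi> \<in> C"
proof (rule ccontr)
  assume nC: "g \<phi> \<notin> C"
  let ?U = "U \<inter> {x \<in> topspace (betaMt M d). g x \<in> - C}"
  have "openin (betaMt M d) ?U"
    using U(1) C by (intro openin_Int openin_continuous_map_preimage[OF g]) (auto simp: closed_def)
  moreover have "\<phi> \<in> ?U" using nC \<phi> U by auto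
  ultimately obtain s where "s \<in> offdiag M" "jbeta M d s \<in> ?U" using dense_beta[OF \<phi>] by blast
  then show False using H by blast
qed

lemma Gset_intro:
  assumes F: "F \<in> bcont (offdiag_top M d)"
    and T: "\<And>x u y. x \<in> M \<Longrightarrow> u \<in> M \<Longrightarrow> y \<in> M \<Longrightarrow> x \<noteq> u \<Longrightarrow> u \<noteq> y \<Longrightarrow> x \<noteq> y \<Longrightarrow>
        d x y * F (x,y) \<le> d x u * F (x,u) + d u y * F (u,y)"
  shows "(\<lambda>\<phi>. \<phi> F) \<in> Gset M d"
  unfolding Gset_def using ev_cont[OF F] T ev_jbeta[OF F] by auto

lemma rho_cont:
  assumes "z \<in> M" "sel = fst \<or> sel = snd"
  shows "continuous_map (offdiag_top M d) euclideanreal (\<lambda>p. d (sel p) z)"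
proof -
  have "continuous_map (offdiag_top M d) euclidean (\<lambda>p. mdist (metric (M,d)) (sel p) ((\<lambda>_. z) p))"
    by (intro continuous_map_mdist) (use sel_cont[OF assms(2)] assms(1) in \<open>auto simp: mtop_eq Metric_space.topspace_mtopology[OF ms]\<close>)
  then show ?thesis by (simp add: Metric_space.mdist_metric[OF ms])
qed

lemma dpos: "x \<in> M \<Longrightarrow> y \<in> M \<Longrightarrow> x \<noteq> y \<Longrightarrow> d x y > 0"
  using dist_pos[of "(x,y)"] by (simp add: offdiag_def)

lemma Gr_bcont:
  assumes z: "z \<in> M"
  shows "Gr d z r \<in> bcont (offdiag_top M d)"
proof (rule bcontI[where B=1])
  show "continuous_map (offdiag_top M d) euclideanreal (Gr d z r)"
    unfolding Gr_def
    by (intro continuous_intros rho_cont[OF z] dist_cont) (auto simp: topspace_offdiag dest: dist_pos)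
  fix s assume "s \<in> offdiag M"
  then have "d (fst s) (snd s) > 0" by (rule dist_pos)
  then show "\<bar>Gr d z r s\<bar> \<le> 1" unfolding Gr_def by (auto simp: abs_le_iff)
qed

lemma Gr_G:
  assumes z: "z \<in> M"
  shows "(\<lambda>\<phi>. \<phi> (Gr d z r)) \<in> Gset M d"
proof (rule Gset_intro[OF Gr_bcont[OF z]])
  fix x u y assume xyz: "x \<in> M" "u \<in> M" "y \<in> M" "x \<noteq> u" "u \<noteq> y" "x \<noteq> y"
  note tri = Metric_space.triangle[OF ms] and com = Metric_space.commute[OF ms]
  have p: "d x y > 0" "d x u > 0" "d u y > 0" using dpos xyz by auto
  define c where "c w = max (d w z - r) 0" for w
  have lip: "c v \<le> c w + d v w" if "v \<in> M" "w \<in> M" for v w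
    using tri[of v w z] that z Metric_space.nonneg[OF ms, of v w] unfolding c_def by auto
  have c0: "c w \<ge> 0" for w by (simp add: c_def)
  have "min (d x y) (c x + c y) \<le> min (d x u) (c x + c u) + min (d u y) (c u + c y)"
    using tri[of x u y] lip[of x u] lip[of y u] com[of y u] c0[of x] c0[of y] c0[of u] xyz
    by (smt (verit))
  then show "d x y * Gr d z r (x, y) \<le> d x u * Gr d z r (x, u) + d u y * Gr d z r (u, y)"
    unfolding Gr_def using p by (simp add: mulmin c_def)
qed

lemma Rset_open:
  assumes z: "z \<in> M"
  shows "openin (betaMt M d) (Rset M d z)"
proof -
  have c1: "continuous_map (betaMt M d) euclidean (\<lambda>\<phi>. dbar0 M d z (proj1 M d \<phi>))"
    using continuous_map_compose[OF conjunct1[OF proj1_props] conjunct1[OF dbar0_props[OF z]]] by (simp add: o_def)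
  have c2: "continuous_map (betaMt M d) euclidean (\<lambda>\<phi>. dbar0 M d z (proj2 M d \<phi>))"
    using continuous_map_compose[OF conjunct1[OF proj2_props] conjunct1[OF dbar0_props[OF z]]] by (simp add: o_def)
  have "openin (betaMt M d) ({\<phi> \<in> topspace (betaMt M d). dbar0 M d z (proj1 M d \<phi>) \<in> {..<\<infinity>}}
       \<inter> {\<phi> \<in> topspace (betaMt M d). dbar0 M d z (proj2 M d \<phi>) \<in> {..<\<infinity>}})"
    by (intro openin_Int openin_continuous_map_preimage[OF c1] openin_continuous_map_preimage[OF c2]) auto
  moreover have "Rset M d z = {\<phi> \<in> topspace (betaMt M d). dbar0 M d z (proj1 M d \<phi>) \<in> {..<\<infinity>}}
       \<inter> {\<phi> \<in> topspace (betaMt M d). dbar0 M d z (proj2 M d \<phi>) \<in> {..<\<infinity>}}"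
    unfolding Rset_def RM_def using conjunct1[OF proj1_props] conjunct1[OF proj2_props]
    by (auto simp: continuous_map_def)
  ultimately show ?thesis by simp
qed

lemma dbar_jbeta1: "z \<in> M \<Longrightarrow> s \<in> offdiag M \<Longrightarrow> dbar0 M d z (proj1 M d (jbeta M d s)) = ereal (d (fst s) z)"
  using proj1_props dbar0_props sel_in[of fst s] by auto

lemma dbar_jbeta2: "z \<in> M \<Longrightarrow> s \<in> offdiag M \<Longrightarrow> dbar0 M d z (proj2 M d (jbeta M d s)) = ereal (d (snd s) z)"
  using proj2_props dbar0_props sel_in[of snd s] by auto

lemma R_nbhd:
  assumes z: "z \<in> M" and \<phi>: "\<phi> \<in> Rset M d z"
  shows "\<exists>B>0. \<exists>U. openin (betaMt M d) U \<and> \<phi> \<in> U \<and>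
     (\<forall>s\<in>offdiag M. jbeta M d s \<in> U \<longrightarrow> d (fst s) z < B \<and> d (snd s) z < B)"
proof -
  have "dbar0 M d z (proj1 M d \<phi>) \<noteq> \<infinity>" "dbar0 M d z (proj2 M d \<phi>) \<noteq> \<infinity>"
    using \<phi> by (auto simp: Rset_def RM_def)
  then obtain n1 n2 :: nat where n: "dbar0 M d z (proj1 M d \<phi>) < ereal (real n1)"
     "dbar0 M d z (proj2 M d \<phi>) < ereal (real n2)"
    unfolding less_PInf_Ex_of_nat by blast
  define B where "B = real n1 + real n2 + 1"
  have c1: "continuous_map (betaMt M d) euclidean (\<lambda>\<phi>. dbar0 M d z (proj1 M d \<phi>))"
    using continuous_map_compose[OF conjunct1[OF proj1_props] conjunct1[OF dbar0_props[OF z]]] by (simp add: o_def)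
  have c2: "continuous_map (betaMt M d) euclidean (\<lambda>\<phi>. dbar0 M d z (proj2 M d \<phi>))"
    using continuous_map_compose[OF conjunct1[OF proj2_props] conjunct1[OF dbar0_props[OF z]]] by (simp add: o_def)
  let ?U = "{\<phi> \<in> topspace (betaMt M d). dbar0 M d z (proj1 M d \<phi>) \<in> {..<ereal B}}
       \<inter> {\<phi> \<in> topspace (betaMt M d). dbar0 M d z (proj2 M d \<phi>) \<in> {..<ereal B}}"
  have "openin (betaMt M d) ?U"
    by (intro openin_Int openin_continuous_map_preimage[OF c1] openin_continuous_map_preimage[OF c2]) auto
  moreover have "\<phi> \<in> ?U"
    using n \<phi> unfolding B_def Rset_def
    by (auto elim: order.strict_trans2)
  moreover have "d (fst s) z < B \<and> d (snd s) z < B" if "s \<in> offdiag M" "jbeta M d s \<in> ?U" for s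
    using that dbar_jbeta1[OF z that(1)] dbar_jbeta2[OF z that(1)] by auto
  moreover have "B > 0" by (simp add: B_def)
  ultimately show ?thesis by blast
qed

lemma nonR_nbhd:
  assumes z: "z \<in> M" and \<phi>: "\<phi> \<in> topspace (betaMt M d) - Rset M d z"
  shows "\<exists>U. openin (betaMt M d) U \<and> \<phi> \<in> U \<and>
     (\<forall>s\<in>offdiag M. jbeta M d s \<in> U \<longrightarrow> d (fst s) z + d (snd s) z > T)"
proof -
  have c1: "continuous_map (betaMt M d) euclidean (\<lambda>\<phi>. dbar0 M d z (proj1 M d \<phi>))"
    using continuous_map_compose[OF conjunct1[OF proj1_props] conjunct1[OF dbar0_props[OF z]]] by (simp add: o_def)
  have c2: "continuous_map (betaMt M d) euclidean (\<lambda>\<phi>. dbar0 M d z (proj2 M d \<phi>))"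
    using continuous_map_compose[OF conjunct1[OF proj2_props] conjunct1[OF dbar0_props[OF z]]] by (simp add: o_def)
  have inS: "proj1 M d \<phi> \<in> topspace (samuel M d)" "proj2 M d \<phi> \<in> topspace (samuel M d)"
    using \<phi> conjunct1[OF proj1_props] conjunct1[OF proj2_props] by (auto simp: continuous_map_def)
  have nn: "d x z \<ge> 0" for x using Metric_space.nonneg[OF ms] .
  have "dbar0 M d z (proj1 M d \<phi>) = \<infinity> \<or> dbar0 M d z (proj2 M d \<phi>) = \<infinity>"
    using \<phi> inS by (auto simp: Rset_def RM_def)
  then show ?thesis
  proof
    assume i: "dbar0 M d z (proj1 M d \<phi>) = \<infinity>"
    let ?U = "{\<phi> \<in> topspace (betaMt M d). dbar0 M d z (proj1 M d \<phi>) \<in> {ereal T<..}}"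
    have "openin (betaMt M d) ?U"
      by (intro openin_continuous_map_preimage[OF c1]) auto
    moreover have "\<phi> \<in> ?U" using i \<phi> by auto
    moreover have "d (fst s) z + d (snd s) z > T" if "s \<in> offdiag M" "jbeta M d s \<in> ?U" for s
      using that dbar_jbeta1[OF z that(1)] nn[of "snd s"] by auto
    ultimately show ?thesis by blast
  next
    assume i: "dbar0 M d z (proj2 M d \<phi>) = \<infinity>"
    let ?U = "{\<phi> \<in> topspace (betaMt M d). dbar0 M d z (proj2 M d \<phi>) \<in> {ereal T<..}}"
    have "openin (betaMt M d) ?U"
      by (intro openin_continuous_map_preimage[OF c2]) auto
    moreover have "\<phi> \<in> ?U" using i \<phi> by auto
    moreover have "d (fst s) z + d (snd s) z > T" if "s \<in> offdiag M" "jbeta M d s \<in> ?U" for s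
      using that dbar_jbeta2[OF z that(1)] nn[of "fst s"] by auto
    ultimately show ?thesis by blast
  qed
qed

lemma Gr_nonneg: "s \<in> offdiag M \<Longrightarrow> 0 \<le> Gr d z r s"
  using dist_pos[of s] unfolding Gr_def by auto

lemma Gr_half:
  assumes z: "z \<in> M" and s: "s \<in> offdiag M" and r: "r \<ge> 0"
    and S: "d (fst s) z + d (snd s) z > 4 * r + 1"
  shows "Gr d z r s \<ge> 1/2"
proof -
  obtain x y where xy: "s = (x,y)" "x \<in> M" "y \<in> M" "x \<noteq> y" using s by (auto simp: offdiag_def)
  have D: "d x y > 0" using dpos xy by auto
  have Dle: "d x y \<le> d x z + d y z"
    using Metric_space.triangle[OF ms, of x z y] Metric_space.commute[OF ms, of z y] xy z by auto
  let ?N = "max (d x z - r) 0 + max (d y z - r) 0"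
  have "?N \<ge> d x z + d y z - 2 * r" by auto
  moreover have "d x z + d y z > 4 * r + 1" using S xy by simp
  ultimately have "2 * ?N \<ge> d x y" using Dle r by (smt (verit))
  then have "?N / d x y \<ge> 1/2" using D by (simp add: le_divide_eq)
  then show ?thesis unfolding Gr_def xy by simp
qed

lemma Gr_zero:
  assumes "d (fst s) z \<le> r" "d (snd s) z \<le> r"
  shows "Gr d z r s = 0"
  using assms unfolding Gr_def by simp

lemma nonR_null:
  assumes z: "z \<in> M" and r\<mu>: "radon_measure (betaMt M d) \<mu>" and r\<nu>: "radon_measure (betaMt M d) \<nu>"
    and pre: "mpreceq M d \<mu> \<nu>" and ae: "AE \<phi> in \<nu>. \<phi> \<in> Rset M d z"
  shows "emeasure \<mu> (topspace (betaMt M d) - Rset M d z) = 0"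
proof -
  let ?K = "betaMt M d"
  let ?N = "topspace ?K - Rset M d z"
  define g where "g n = (\<lambda>\<phi>::(('a\<times>'a) \<Rightarrow> real) \<Rightarrow> real. \<phi> (Gr d z (real n)))" for n :: nat
  have gc: "continuous_map ?K euclideanreal (g n)" for n
    unfolding g_def by (rule ev_cont[OF Gr_bcont[OF z]])
  have gj: "g n (jbeta M d s) = Gr d z (real n) s" for n s
    unfolding g_def by (rule ev_jbeta[OF Gr_bcont[OF z]])
  have g01: "g n \<phi> \<in> {0..1}" if "\<phi> \<in> topspace ?K" for n \<phi>
  proof (rule dense_bound[OF gc that openin_topspace that])
    fix s assume "s \<in> offdiag M"
    then show "g n (jbeta M d s) \<in> {0..1}" unfolding gj using Gr_nonneg[of s] by (auto simp: Gr_def)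
  qed auto
  have int\<mu>: "integrable \<mu> (g n)" for n
    by (rule radon_integrable[OF r\<mu> gc, where B=1]) (use g01 in auto)
  have int\<nu>: "integrable \<nu> (g n)" for n
    by (rule radon_integrable[OF r\<nu> gc, where B=1]) (use g01 in auto)
  interpret fm\<mu>: finite_measure \<mu> using r\<mu> by (simp add: radon_measure_def)
  interpret fm\<nu>: finite_measure \<nu> using r\<nu> by (simp add: radon_measure_def)
  have Nc: "closedin ?K ?N" using Rset_open[OF z] by (intro closedin_diff) auto
  have Ns: "?N \<in> sets \<mu>" by (rule radon_closed[OF r\<mu> Nc])
  have half: "g n \<phi> \<ge> 1/2" if \<phi>N: "\<phi> \<in> ?N" for n \<phi>
  proof -
    obtain U where U: "openin ?K U" "\<phi> \<in> U"
      "\<forall>s\<in>offdiag M. jbeta M d s \<in> U \<longrightarrow> d (fst s) z + d (snd s) z > 4 * real n + 1"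
      using nonR_nbhd[OF z \<phi>N] by blast
    have "g n \<phi> \<in> {1/2..}"
    proof (rule dense_bound[OF gc _ U(1,2)])
      show "\<phi> \<in> topspace ?K" using \<phi>N by auto
      fix s assume "s \<in> offdiag M" "jbeta M d s \<in> U"
      then show "g n (jbeta M d s) \<in> {1/2..}" unfolding gj using U(3) Gr_half[OF z] by auto
    qed auto
    then show ?thesis by auto
  qed
  have lower: "(1/2) * measure \<mu> ?N \<le> integral\<^sup>L \<mu> (g n)" for n
  proof -
    have "integral\<^sup>L \<mu> (\<lambda>\<phi>. (1/2::real) * indicator ?N \<phi>) \<le> integral\<^sup>L \<mu> (g n)"
    proof (rule integral_mono)
      show "integrable \<mu> (\<lambda>\<phi>. (1/2::real) * indicator ?N \<phi>)"
        using Ns by (intro integrable_mult_right integrable_real_indicator) (auto simp: less_top[symmetric])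
      show "integrable \<mu> (g n)" by (rule int\<mu>)
      fix \<phi> assume "\<phi> \<in> space \<mu>"
      then have "\<phi> \<in> topspace ?K" using radon_space[OF r\<mu>] by simp
      then show "(1/2::real) * indicator ?N \<phi> \<le> g n \<phi>"
        using half[of \<phi> n] g01[of \<phi> n] by (auto simp: indicator_def)
    qed
    moreover have "?N \<inter> space \<mu> = ?N" using radon_space[OF r\<mu>] by auto
    ultimately show ?thesis by simp
  qed
  have lim: "(\<lambda>n. integral\<^sup>L \<nu> (g n)) \<longlonglongrightarrow> integral\<^sup>L \<nu> (\<lambda>_. 0::real)"
  proof (rule integral_dominated_convergence[where w="\<lambda>_. 1"])
    show "(\<lambda>_. 0::real) \<in> borel_measurable \<nu>" by simp
    show "g n \<in> borel_measurable \<nu>" for n by (rule radon_meas[OF r\<nu> gc])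
    show "integrable \<nu> (\<lambda>_. 1::real)" by simp
    show "AE x in \<nu>. norm (g n x) \<le> 1" for n
      using g01 radon_space[OF r\<nu>] by (intro AE_I2) auto
    show "AE x in \<nu>. (\<lambda>n. g n x) \<longlonglongrightarrow> 0"
      using ae
    proof (rule AE_mp, intro AE_I2 impI)
      fix \<phi> assume "\<phi> \<in> space \<nu>" "\<phi> \<in> Rset M d z"
      then obtain B U where BU: "B > 0" "openin ?K U" "\<phi> \<in> U"
        "\<forall>s\<in>offdiag M. jbeta M d s \<in> U \<longrightarrow> d (fst s) z < B \<and> d (snd s) z < B"
        using R_nbhd[OF z] by blast
      have \<phi>t: "\<phi> \<in> topspace ?K" using \<open>\<phi> \<in> Rset M d z\<close> by (simp add: Rset_def)
      have "g n \<phi> = 0" if n: "real n \<ge> B" for n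
      proof -
        have "g n \<phi> \<in> {0}"
        proof (rule dense_bound[OF gc \<phi>t BU(2,3)])
          fix s assume "s \<in> offdiag M" "jbeta M d s \<in> U"
          then have "d (fst s) z \<le> real n" "d (snd s) z \<le> real n" using BU(4) n by force+
          then show "g n (jbeta M d s) \<in> {0}" unfolding gj using Gr_zero by simp
        qed auto
        then show ?thesis by simp
      qed
      then have "eventually (\<lambda>n. g n \<phi> = 0) sequentially"
        unfolding eventually_sequentially by (metis real_nat_ceiling_ge order_trans of_nat_le_iff)
      then show "(\<lambda>n. g n \<phi>) \<longlonglongrightarrow> 0" by (rule tendsto_eventually)
    qed
  qed
  have "(1/2) * measure \<mu> ?N \<le> 0"
  proof (rule LIMSEQ_le_const[OF lim[simplified]])
    show "\<exists>N. \<forall>n\<ge>N. 1 / 2 * measure \<mu> ?N \<le> integral\<^sup>L \<nu> (g n)"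
      using lower pre Gr_G[OF z] unfolding mpreceq_def g_def by (meson order_trans)
  qed
  then have "measure \<mu> ?N = 0" using measure_nonneg[of \<mu> ?N] by linarith
  then show ?thesis using fm\<mu>.emeasure_eq_measure by simp
qed

lemma infc_props:
  assumes M: "M \<noteq> {}" and a0: "\<And>u. u \<in> M \<Longrightarrow> a u \<ge> 0"
  shows "\<And>x. x \<in> M \<Longrightarrow> 0 \<le> infc M d a x"
    and "\<And>x. x \<in> M \<Longrightarrow> infc M d a x \<le> a x"
    and "\<And>x y. x \<in> M \<Longrightarrow> y \<in> M \<Longrightarrow> infc M d a x \<le> infc M d a y + d x y"
    and "\<And>x \<delta>. x \<in> M \<Longrightarrow> (\<And>u. u \<in> M \<Longrightarrow> d u x < \<delta> \<Longrightarrow> \<bar>a u - a x\<bar> < 1/2) \<Longrightarrow>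
           min (a x - 1/2) \<delta> \<le> infc M d a x"
proof -
  note nn = Metric_space.nonneg[OF ms]
  have bdd: "bdd_below ((\<lambda>u. a u + d x u) ` M)" for x
    using a0 nn by (intro bdd_belowI[of _ 0]) (auto intro: add_nonneg_nonneg)
  show "0 \<le> infc M d a x" if "x \<in> M" for x
    unfolding infc_def using M a0 nn by (intro cINF_greatest) (auto intro: add_nonneg_nonneg)
  show "infc M d a x \<le> a x" if "x \<in> M" for x
  proof -
    have "d x x = 0" using Metric_space.zero[OF ms, of x x] that by simp
    then show ?thesis unfolding infc_def using cINF_lower[OF bdd that, of x] by simp
  qed
  show "infc M d a x \<le> infc M d a y + d x y" if "x \<in> M" "y \<in> M" for x y
  proof -
    have "infc M d a x - d x y \<le> a u + d y u" if u: "u \<in> M" for u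
    proof -
      have "infc M d a x \<le> a u + d x u" unfolding infc_def by (rule cINF_lower[OF bdd u])
      moreover have "d x u \<le> d x y + d y u" using Metric_space.triangle[OF ms] \<open>x \<in> M\<close> \<open>y \<in> M\<close> u by blast
      ultimately show ?thesis by linarith
    qed
    then have "infc M d a x - d x y \<le> infc M d a y"
      unfolding infc_def[of M d a y] using M by (intro cINF_greatest) auto
    then show ?thesis by linarith
  qed
  show "min (a x - 1/2) \<delta> \<le> infc M d a x"
    if x: "x \<in> M" and H: "\<And>u. u \<in> M \<Longrightarrow> d u x < \<delta> \<Longrightarrow> \<bar>a u - a x\<bar> < 1/2" for x \<delta>
    unfolding infc_def
  proof (rule cINF_greatest[OF M])
    fix u assume u: "u \<in> M"
    show "min (a x - 1/2) \<delta> \<le> a u + d x u"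
    proof (cases "d u x < \<delta>")
      case True
      then have "\<bar>a u - a x\<bar> < 1/2" using H[OF u] by blast
      then have "a u > a x - 1/2" by (smt (verit))
      then show ?thesis using nn[of x u] by (simp add: min_le_iff_disj)
    next
      case False
      then show ?thesis using a0[OF u] Metric_space.commute[OF ms, of u x] by auto
    qed
  qed
qed

lemma Gl_bcont:
  assumes sel: "sel = fst \<or> sel = snd" and b: "b \<in> buc M d" and b0: "\<And>x. x \<in> M \<Longrightarrow> b x \<ge> 0"
  shows "Gl d sel b \<in> bcont (offdiag_top M d)"
proof (rule bcontI[where B=1])
  have bc: "continuous_map (offdiag_top M d) euclideanreal (\<lambda>p. b (sel p))"
    using continuous_map_compose[OF sel_cont[OF sel] buc_cont[OF b]] by (simp add: o_def)
  show "continuous_map (offdiag_top M d) euclideanreal (Gl d sel b)"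
    unfolding Gl_def
    by (intro continuous_intros bc dist_cont) (auto simp: topspace_offdiag dest: dist_pos)
  fix s assume s: "s \<in> offdiag M"
  then have "d (fst s) (snd s) > 0" by (rule dist_pos)
  moreover have "b (sel s) \<ge> 0" using b0 sel_in[OF sel s] by simp
  ultimately show "\<bar>Gl d sel b s\<bar> \<le> 1" unfolding Gl_def by (auto simp: abs_le_iff)
qed

lemma Gl_G:
  assumes sel: "sel = fst \<or> sel = snd" and b: "b \<in> buc M d" and b0: "\<And>x. x \<in> M \<Longrightarrow> b x \<ge> 0"
    and lip: "\<And>x y. x \<in> M \<Longrightarrow> y \<in> M \<Longrightarrow> b x \<le> b y + d x y"
  shows "(\<lambda>\<phi>. \<phi> (Gl d sel b)) \<in> Gset M d"
proof (rule Gset_intro[OF Gl_bcont[OF sel b b0]])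
  fix x u y assume xyz: "x \<in> M" "u \<in> M" "y \<in> M" "x \<noteq> u" "u \<noteq> y" "x \<noteq> y"
  note tri = Metric_space.triangle[OF ms] and com = Metric_space.commute[OF ms]
  have p: "d x y > 0" "d x u > 0" "d u y > 0" using dpos xyz by auto
  have l1: "b x \<le> b u + d x u" "b y \<le> b u + d u y"
    using lip[of x u] lip[of y u] com[of y u] xyz by auto
  have "min (d x y) (b (sel (x,y))) \<le> min (d x u) (b (sel (x,u))) + min (d u y) (b (sel (u,y)))"
    using sel
  proof
    assume "sel = fst"
    then show ?thesis using tri[OF xyz(1-3)] l1 Metric_space.nonneg[OF ms, of x u] Metric_space.nonneg[OF ms, of u y] b0[OF xyz(1)] b0[OF xyz(2)] b0[OF xyz(3)] by (simp; smt (verit))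
  next
    assume "sel = snd"
    then show ?thesis using tri[OF xyz(1-3)] l1 Metric_space.nonneg[OF ms, of x u] Metric_space.nonneg[OF ms, of u y] b0[OF xyz(1)] b0[OF xyz(2)] b0[OF xyz(3)] by (simp; smt (verit))
  qed
  then show "d x y * Gl d sel b (x, y) \<le> d x u * Gl d sel b (x, u) + d u y * Gl d sel b (u, y)"
    unfolding Gl_def using p by (simp add: mulmin)
qed

end
context msp begin
lemma lip_absc: "(L::real) \<ge> 0 \<Longrightarrow> \<bar>L * \<bar>a - c\<bar> - L * \<bar>b - c\<bar>\<bar> \<le> L * \<bar>a - b\<bar>"
proof -
  assume L: "L \<ge> 0"
  have "\<bar>L * \<bar>a - c\<bar> - L * \<bar>b - c\<bar>\<bar> = L * \<bar>\<bar>a - c\<bar> - \<bar>b - c\<bar>\<bar>"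
    using L by (simp add: right_diff_distrib[symmetric] abs_mult)
  also have "\<dots> \<le> L * \<bar>a - b\<bar>"
    using L by (intro mult_left_mono) (use abs_triangle_ineq3[of "a-c" "b-c"] in auto)
  finally show ?thesis .
qed

lemma lip_max1: "\<bar>max 0 (1 - (a::real)) - max 0 (1 - b)\<bar> \<le> 1 * \<bar>a - b\<bar>"
  by (smt (verit))

lemma main_sel:
  fixes sel :: "'a \<times> 'a \<Rightarrow> 'a"
  assumes sel: "(sel = fst \<and> pr = proj1 M d) \<or> (sel = snd \<and> pr = proj2 M d)"
    and z: "z \<in> M" and r\<mu>: "radon_measure (betaMt M d) \<mu>" and r\<nu>: "radon_measure (betaMt M d) \<nu>"
    and pre: "mpreceq M d \<mu> \<nu>" and ae: "AE \<phi> in \<nu>. \<phi> \<in> Rset M d z"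
    and \<phi>0: "\<phi>0 \<in> support_of (betaMt M d) \<mu>"
  shows "pr \<phi>0 \<in> pr ` support_of (betaMt M d) \<nu>"
proof (rule ccontr)
  let ?K = "betaMt M d"
  let ?S = "samuel M d"
  let ?Kc = "pr ` support_of ?K \<nu>"
  assume nK: "pr \<phi>0 \<notin> ?Kc"
  define \<eta> where "\<eta> = pr \<phi>0"
  have sel': "sel = fst \<or> sel = snd" using sel by auto
  have pp: "continuous_map ?K ?S pr \<and> (\<forall>s\<in>offdiag M. pr (jbeta M d s) = ju M d (sel s))"
    using sel
  proof
    assume "sel = fst \<and> pr = proj1 M d"
    then show ?thesis using proj1_props by simp
  next
    assume "sel = snd \<and> pr = proj2 M d"
    then show ?thesis using proj2_props by simp
  qed
  have prc: "continuous_map ?K ?S pr" using pp by blast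
  have prj: "\<And>s. s \<in> offdiag M \<Longrightarrow> pr (jbeta M d s) = ju M d (sel s)" using pp by blast
  have null: "emeasure \<mu> (topspace ?K - Rset M d z) = 0"
    by (rule nonR_null[OF z r\<mu> r\<nu> pre ae])
  have \<phi>0t: "\<phi>0 \<in> topspace ?K" using \<phi>0 unfolding support_of_def by blast
  have \<eta>t: "\<eta> \<in> topspace ?S" using continuous_map_image_subset_topspace[OF prc] \<phi>0t unfolding \<eta>_def by blast
  have Kc: "compactin ?S ?Kc"
    by (rule image_compactin[OF closedin_compact_space[OF compact_beta supp_closed] prc])
  have Kt: "?Kc \<subseteq> topspace ?S" using compactin_subset_topspace[OF Kc] .
  have sep: "\<exists>f. f \<in> buc M d \<and> k f \<noteq> \<eta> f" if k: "k \<in> ?Kc" for k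
  proof (rule ccontr)
    assume "\<not> (\<exists>f. f \<in> buc M d \<and> k f \<noteq> \<eta> f)"
    then have eq: "\<And>f. f \<in> buc M d \<Longrightarrow> k f = \<eta> f" by blast
    have kt: "k \<in> topspace ?S" using k Kt by blast
    have "k = \<eta>" by (rule PiE_ext[OF samuel_PiE[OF kt] samuel_PiE[OF \<eta>t] eq])
    then show False using k nK \<eta>_def by simp
  qed
  then have "\<forall>k\<in>?Kc. \<exists>f. f \<in> buc M d \<and> k f \<noteq> \<eta> f" by blast
  from bchoice[OF this] obtain fk where fk0: "\<forall>k\<in>?Kc. fk k \<in> buc M d \<and> k (fk k) \<noteq> \<eta> (fk k)"
    by blast
  have fk: "\<And>k. k \<in> ?Kc \<Longrightarrow> fk k \<in> buc M d \<and> k (fk k) \<noteq> \<eta> (fk k)" using fk0 by blast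
  define \<delta>k where "\<delta>k k = \<bar>k (fk k) - \<eta> (fk k)\<bar>" for k
  have \<delta>kp: "k \<in> ?Kc \<Longrightarrow> \<delta>k k > 0" for k using fk by (simp add: \<delta>k_def)
  define W where "W k = {\<psi> \<in> topspace ?S. \<bar>\<psi> (fk k) - \<eta> (fk k)\<bar> \<in> {\<delta>k k / 2<..}}" for k
  have Wo: "openin ?S (W k)" if "k \<in> ?Kc" for k
    unfolding W_def
  proof (rule openin_continuous_map_preimage[where Y=euclideanreal])
    show "continuous_map ?S euclideanreal (\<lambda>x. \<bar>x (fk k) - \<eta> (fk k)\<bar>)"
      using fk[OF that] by (intro continuous_intros evu_cont) auto
  qed auto
  have kW: "k \<in> W k" if "k \<in> ?Kc" for k
    using \<delta>kp[OF that] Kt that unfolding W_def \<delta>k_def by auto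
  have cov: "(\<forall>B\<in>W ` ?Kc. openin ?S B) \<and> ?Kc \<subseteq> \<Union>(W ` ?Kc)" using Wo kW by blast
  have "\<exists>F. finite F \<and> F \<subseteq> W ` ?Kc \<and> ?Kc \<subseteq> \<Union>F"
    using conjunct2[OF Kc[unfolded compactin_def], THEN spec[of _ "W ` ?Kc"], THEN mp, OF cov] .
  then obtain F where F: "finite F" "F \<subseteq> W ` ?Kc" "?Kc \<subseteq> \<Union>F" by blast
  obtain Kf where Kf: "Kf \<subseteq> ?Kc" "finite Kf" "F = W ` Kf"
    using finite_subset_image[OF F(1,2)] by blast
  define A where "A \<psi> = max 0 (1 - (\<Sum>k\<in>Kf. (2 / \<delta>k k) * \<bar>\<psi> (fk k) - \<eta> (fk k)\<bar>))"
    for \<psi> :: "('a \<Rightarrow> real) \<Rightarrow> real"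
  define a where "a x = A (ju M d x)" for x
  have a_eq: "a x = max 0 (1 - (\<Sum>k\<in>Kf. (2 / \<delta>k k) * \<bar>fk k x - \<eta> (fk k)\<bar>))" for x
    unfolding a_def A_def using fk Kf(1) ju_ev by (intro arg_cong[where f="\<lambda>t. max 0 (1 - t)"] sum.cong) auto
  have Ac: "continuous_map ?S euclideanreal A"
    unfolding A_def
    by (intro continuous_intros evu_cont) (use fk Kf in auto)
  have A\<eta>: "A \<eta> = 1" unfolding A_def by simp
  have A0: "A \<psi> = 0" if \<psi>: "\<psi> \<in> \<Union>F" for \<psi>
  proof -
    obtain k where k: "k \<in> Kf" "\<psi> \<in> W k" using \<psi> Kf(3) by auto
    have dk: "\<delta>k k > 0" using \<delta>kp k Kf(1) by auto
    have "(2 / \<delta>k k) * \<bar>\<psi> (fk k) - \<eta> (fk k)\<bar> > (2 / \<delta>k k) * (\<delta>k k / 2)"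
      using k(2) dk unfolding W_def by (intro mult_strict_left_mono) auto
    then have "(2 / \<delta>k k) * \<bar>\<psi> (fk k) - \<eta> (fk k)\<bar> > 1" using dk by simp
    moreover have "(2 / \<delta>k k) * \<bar>\<psi> (fk k) - \<eta> (fk k)\<bar> \<le> (\<Sum>k\<in>Kf. (2 / \<delta>k k) * \<bar>\<psi> (fk k) - \<eta> (fk k)\<bar>)"
    proof (rule member_le_sum[OF k(1) _ Kf(2)])
      fix x assume "x \<in> Kf - {k}"
      then have "\<delta>k x > 0" using \<delta>kp Kf(1) by blast
      then show "0 \<le> 2 / \<delta>k x * \<bar>\<psi> (fk x) - \<eta> (fk x)\<bar>" by simp
    qed
    ultimately show ?thesis unfolding A_def by simp
  qed
  have a0: "0 \<le> a x" and a1: "a x \<le> 1" for x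
  proof -
    have "0 \<le> (\<Sum>k\<in>Kf. (2 / \<delta>k k) * \<bar>fk k x - \<eta> (fk k)\<bar>)"
    proof (rule sum_nonneg)
      fix k assume "k \<in> Kf"
      then have "\<delta>k k > 0" using \<delta>kp Kf(1) by blast
      then show "0 \<le> 2 / \<delta>k k * \<bar>fk k x - \<eta> (fk k)\<bar>" by simp
    qed
    then show "0 \<le> a x" "a x \<le> 1" unfolding a_eq by auto
  qed
  have auc: "ucf M d a"
  proof -
    have "ucf M d (\<lambda>x. max 0 (1 - (\<Sum>k\<in>Kf. (2 / \<delta>k k) * \<bar>fk k x - \<eta> (fk k)\<bar>)))"
    proof (rule ucf_comp_lip[where L=1, OF _ lip_max1])
      show "ucf M d (\<lambda>x. \<Sum>k\<in>Kf. (2 / \<delta>k k) * \<bar>fk k x - \<eta> (fk k)\<bar>)"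
      proof (rule ucf_sum[OF Kf(2)])
        fix k assume k: "k \<in> Kf"
        then have "fk k \<in> buc M d" using fk Kf(1) by blast
        then have "ucf M d (fk k)" by (simp add: buc_iff)
        moreover have "\<delta>k k > 0" using \<delta>kp k Kf(1) by auto
        ultimately show "ucf M d (\<lambda>x. (2 / \<delta>k k) * \<bar>fk k x - \<eta> (fk k)\<bar>)"
          by (intro ucf_comp_lip[where L="2 / \<delta>k k" and h="\<lambda>t. (2 / \<delta>k k) * \<bar>t - \<eta> (fk k)\<bar>", OF _ lip_absc]) auto
      qed
    qed auto
    then show ?thesis unfolding a_eq .
  qed
  obtain \<delta> where \<delta>: "\<delta> > 0" "\<And>x u. x \<in> M \<Longrightarrow> u \<in> M \<Longrightarrow> d u x < \<delta> \<Longrightarrow> \<bar>a u - a x\<bar> < 1/2"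
    using auc unfolding ucf_def by (meson half_gt_zero zero_less_one)
  have Mne: "M \<noteq> {}" using z by auto
  define b where "b = infc M d a"
  have a0': "\<And>u. u \<in> M \<Longrightarrow> 0 \<le> a u" using a0 by blast
  have b0: "x \<in> M \<Longrightarrow> 0 \<le> b x" for x unfolding b_def by (rule infc_props(1)[OF Mne a0'])
  have ba: "x \<in> M \<Longrightarrow> b x \<le> a x" for x unfolding b_def by (rule infc_props(2)[OF Mne a0'])
  have blip: "x \<in> M \<Longrightarrow> y \<in> M \<Longrightarrow> b x \<le> b y + d x y" for x y
    unfolding b_def by (rule infc_props(3)[OF Mne a0'])
  have blow: "x \<in> M \<Longrightarrow> (\<And>u. u \<in> M \<Longrightarrow> d u x < e \<Longrightarrow> \<bar>a u - a x\<bar> < 1/2) \<Longrightarrow>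
      min (a x - 1/2) e \<le> b x" for x e
    unfolding b_def by (rule infc_props(4)[OF Mne a0'])
  have bbuc: "b \<in> buc M d"
    unfolding buc_iff
  proof
    show "ucf M d b"
    proof (rule lip_ucf[where L=1])
      fix x y assume "x \<in> M" "y \<in> M"
      then show "\<bar>b x - b y\<bar> \<le> 1 * d x y"
        using blip[of x y] blip[of y x] Metric_space.commute[OF ms, of x y] by auto
    qed simp
    have "\<forall>v\<in>b ` M. norm v \<le> 1" using b0 ba a1 by (smt (verit) imageE real_norm_def)
    then show "bounded (b ` M)" unfolding bounded_iff by blast
  qed
  define g where "g = (\<lambda>\<phi>::(('a\<times>'a) \<Rightarrow> real) \<Rightarrow> real. \<phi> (Gl d sel b))"
  have gG: "g \<in> Gset M d" unfolding g_def by (rule Gl_G[OF sel' bbuc b0 blip])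
  have gc: "continuous_map ?K euclideanreal g" unfolding g_def by (rule ev_cont[OF Gl_bcont[OF sel' bbuc b0]])
  have gj: "g (jbeta M d s) = Gl d sel b s" for s unfolding g_def by (rule ev_jbeta[OF Gl_bcont[OF sel' bbuc b0]])
  have g01: "g \<phi> \<in> {0..1}" if "\<phi> \<in> topspace ?K" for \<phi>
  proof (rule dense_bound[OF gc that openin_topspace that])
    fix s assume s: "s \<in> offdiag M"
    then have "d (fst s) (snd s) > 0" "b (sel s) \<ge> 0" using dist_pos b0 sel_in[OF sel'] by auto
    then show "g (jbeta M d s) \<in> {0..1}" unfolding gj Gl_def by auto
  qed auto
  have int\<mu>: "integrable \<mu> g" by (rule radon_integrable[OF r\<mu> gc, where B=1]) (use g01 in auto)
  have gsupp: "g \<phi> = 0" if \<phi>: "\<phi> \<in> support_of ?K \<nu>" for \<phi>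
  proof -
    have \<phi>t: "\<phi> \<in> topspace ?K" using \<phi> unfolding support_of_def by blast
    let ?U = "{\<phi> \<in> topspace ?K. pr \<phi> \<in> \<Union>F}"
    have "openin ?K ?U"
      using Wo Kf by (intro openin_continuous_map_preimage[OF prc] openin_Union) auto
    moreover have "\<phi> \<in> ?U" using \<phi>t \<phi> F(3) by auto
    ultimately have "g \<phi> \<in> {0}"
    proof (rule dense_bound[OF gc \<phi>t])
      fix s assume s: "s \<in> offdiag M" "jbeta M d s \<in> ?U"
      then have "ju M d (sel s) \<in> \<Union>F" using prj by auto
      then have "a (sel s) = 0" unfolding a_def using A0 by simp
      then have "b (sel s) = 0" using b0[of "sel s"] ba[of "sel s"] sel_in[OF sel' s(1)] by simp
      then show "g (jbeta M d s) \<in> {0}" unfolding gj Gl_def by simp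
    qed auto
    then show ?thesis by simp
  qed
  have int\<nu>0: "integral\<^sup>L \<nu> g = 0"
  proof (rule integral_eq_zero_AE)
    have "topspace ?K - support_of ?K \<nu> \<in> null_sets \<nu>"
      using radon_open[OF r\<nu> supp_open] supp_null[OF r\<nu>] by (simp add: null_sets_def)
    moreover have "{x \<in> space \<nu>. \<not> g x = 0} \<subseteq> topspace ?K - support_of ?K \<nu>"
      using gsupp radon_space[OF r\<nu>] by auto
    ultimately show "AE x in \<nu>. g x = 0" by (rule AE_I')
  qed
  let ?V = "{\<phi> \<in> topspace ?K. A (pr \<phi>) \<in> {3/4<..}}"
  have Vo: "openin ?K ?V"
    using continuous_map_compose[OF prc Ac] by (intro openin_continuous_map_preimage) (auto simp: o_def)
  have \<phi>0V: "\<phi>0 \<in> ?V" using \<phi>0t A\<eta> \<eta>_def by simp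
  have V0: "emeasure \<mu> ?V > 0" using \<phi>0 Vo \<phi>0V by (auto simp: support_of_def)
  let ?VR = "?V \<inter> Rset M d z"
  have VRs: "?VR \<in> sets \<mu>" using radon_open[OF r\<mu>] Vo Rset_open[OF z] by (simp add: openin_Int)
  have Ns: "topspace ?K - Rset M d z \<in> sets \<mu>"
    using radon_closed[OF r\<mu>] Rset_open[OF z] by (simp add: closedin_diff)
  have VR0: "emeasure \<mu> ?VR > 0"
  proof -
    have "emeasure \<mu> ?V \<le> emeasure \<mu> (?VR \<union> (topspace ?K - Rset M d z))"
      using VRs Ns by (intro emeasure_mono) auto
    also have "\<dots> \<le> emeasure \<mu> ?VR + emeasure \<mu> (topspace ?K - Rset M d z)"
      using VRs Ns by (rule emeasure_subadditive)
    finally show ?thesis using V0 null by simp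
  qed
  have gpos: "g \<phi> > 0" if \<phi>: "\<phi> \<in> ?VR" for \<phi>
  proof -
    obtain B U where BU: "B > 0" "openin ?K U" "\<phi> \<in> U"
        "\<forall>s\<in>offdiag M. jbeta M d s \<in> U \<longrightarrow> d (fst s) z < B \<and> d (snd s) z < B"
    proof -
      have \<phi>R: "\<phi> \<in> Rset M d z" using \<phi> by blast
      show ?thesis using R_nbhd[OF z \<phi>R] that by blast
    qed
    define c where "c = min (1/4) \<delta>"
    have c: "c > 0" using \<delta> by (simp add: c_def)
    have \<phi>t: "\<phi> \<in> topspace ?K" using \<phi> by blast
    have "g \<phi> \<in> {min 1 (c / (2 * B))..}"
    proof (rule dense_bound[OF gc \<phi>t openin_Int[OF Vo BU(2)]])
      show "\<phi> \<in> ?V \<inter> U" using \<phi> BU(3) by blast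
      fix s assume s: "s \<in> offdiag M" "jbeta M d s \<in> ?V \<inter> U"
      have ss: "sel s \<in> M" using sel_in[OF sel' s(1)] .
      have "jbeta M d s \<in> ?V" using s(2) by blast
      then have "A (pr (jbeta M d s)) > 3/4" by simp
      then have "A (ju M d (sel s)) > 3/4" using prj[OF s(1)] by simp
      then have as: "a (sel s) > 3/4" unfolding a_def .
      have "min (a (sel s) - 1/2) \<delta> \<le> b (sel s)"
        using blow[OF ss, of \<delta>] \<delta>(2)[OF ss] by blast
      then have bc: "c \<le> b (sel s)" using as unfolding c_def by linarith
      have D: "d (fst s) (snd s) > 0" using dist_pos[OF s(1)] .
      have "d (fst s) (snd s) \<le> d (fst s) z + d z (snd s)"
        using Metric_space.triangle[OF ms] s(1) z by (auto simp: offdiag_def)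
      moreover have "d z (snd s) = d (snd s) z" using Metric_space.commute[OF ms] by simp
      moreover have "d (fst s) z < B" "d (snd s) z < B" using BU(4) s(1) s(2) by blast+
      ultimately have D2: "d (fst s) (snd s) \<le> 2 * B" by linarith
      have "c / (2 * B) \<le> b (sel s) / d (fst s) (snd s)"
        by (rule frac_le) (use c bc D D2 in auto)
      then show "g (jbeta M d s) \<in> {min 1 (c / (2 * B))..}" unfolding gj Gl_def by auto
    qed auto
    moreover have "min 1 (c / (2 * B)) > 0" using c BU(1) by simp
    ultimately show ?thesis by auto
  qed
  have "integral\<^sup>L \<mu> g \<le> integral\<^sup>L \<nu> g" using pre gG unfolding mpreceq_def by blast
  then have i1: "integral\<^sup>L \<mu> g \<le> 0" using int\<nu>0 by simp
  have nn: "AE x in \<mu>. 0 \<le> g x"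
  proof (rule AE_I2)
    fix x assume "x \<in> space \<mu>"
    then have "x \<in> topspace ?K" using radon_space[OF r\<mu>] by simp
    then show "0 \<le> g x" using g01 by simp
  qed
  have i2: "integral\<^sup>L \<mu> g \<ge> 0" by (rule integral_nonneg_AE[OF nn])
  have "integral\<^sup>L \<mu> g = 0" using i1 i2 by linarith
  then have "AE x in \<mu>. g x = 0" using integral_nonneg_eq_0_iff_AE[OF int\<mu> nn] by blast
  then obtain N where N: "{x \<in> space \<mu>. \<not> g x = 0} \<subseteq> N" "emeasure \<mu> N = 0" "N \<in> sets \<mu>"
    by (erule AE_E)
  have "?VR \<subseteq> N"
  proof
    fix \<phi> assume \<phi>: "\<phi> \<in> ?VR"
    then have "\<phi> \<in> space \<mu>" using radon_space[OF r\<mu>] by blast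
    moreover have "g \<phi> \<noteq> 0" using gpos[OF \<phi>] by simp
    ultimately show "\<phi> \<in> N" using N(1) by blast
  qed
  then have "emeasure \<mu> ?VR \<le> emeasure \<mu> N" by (rule emeasure_mono[OF _ N(3)])
  then have "emeasure \<mu> ?VR \<le> 0" using N(2) by simp
  then have "emeasure \<mu> ?VR = 0" by simp
  then show False using VR0 by simp
qed

end

theorem corollary3p30:
  fixes M :: "'a set" and d :: "'a \<Rightarrow> 'a \<Rightarrow> real" and z :: 'a
    and \<mu> \<nu> :: "((('a \<times> 'a) \<Rightarrow> real) \<Rightarrow> real) measure"
  assumes "Metric_space M d" and "Metric_space.mcomplete M d" and "z \<in> M"
    and "\<exists>a\<in>M. \<exists>b\<in>M. \<exists>c\<in>M. a \<noteq> b \<and> b \<noteq> c \<and> a \<noteq> c"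
    and "radon_measure (betaMt M d) \<mu>" and "radon_measure (betaMt M d) \<nu>"
    and "mpreceq M d \<mu> \<nu>"
    and "AE \<phi> in \<nu>. \<phi> \<in> Rset M d z"
  shows "proj1 M d ` support_of (betaMt M d) \<mu> \<subseteq> proj1 M d ` support_of (betaMt M d) \<nu>
       \<and> proj2 M d ` support_of (betaMt M d) \<mu> \<subseteq> proj2 M d ` support_of (betaMt M d) \<nu>"
proof -
  interpret msp M d by (rule msp.intro) (rule assms(1))
  have "proj1 M d \<phi> \<in> proj1 M d ` support_of (betaMt M d) \<nu>"
    if "\<phi> \<in> support_of (betaMt M d) \<mu>" for \<phi>
    by (rule main_sel[where sel=fst, OF _ assms(3) assms(5-8) that]) simp
  moreover have "proj2 M d \<phi> \<in> proj2 M d ` support_of (betaMt M d) \<nu>"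
    if "\<phi> \<in> support_of (betaMt M d) \<mu>" for \<phi>
    by (rule main_sel[where sel=snd, OF _ assms(3) assms(5-8) that]) simp
  ultimately show ?thesis by blast
qed

end
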